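(* Let $n > 1$ and let $H_n$ denote the Boolean hypercube graph on vertex set $\{0,1\}^n$, in which two vertices are adjacent iff they differ in exactly one coordinate. Suppose $K \subseteq \{0,1\}^n$ satisfies $|K| > 2^{n-1}$, and suppose that for some $D > 0$ every $y \in K$ has degree at most $D$ in the induced subgraph $H_n[K]$ (the graph on vertex set $K$ whose edges are the edges of $H_n$ with both endpoints in $K$). Then $\mathrm{compl}(\mathcal{G}_{CS,n}) \leq D$.
   Context: Let $S_n$ be the set of permutations $\pi=(\pi(1),\dots,\pi(n))$ of $[n]=\{1,\dots,n\}$. A Bob-strategy is a family of functions $F_t : S_n \to \{0,1\}$, $t=1,\dots,n-1$, where each $F_t$ is $t$-restricted, i.e. $F_t(\pi)$ depends only on $\pi(1),\dots,\pi(t)$. For a fixed Bob-strategy, a permutation $\pi\in S_n$ and $z\in\{0,1\}$, define $b(\pi,z)\in\{0,1\}^n$ by $b_j = F_t(\pi)$ if $j=\pi(t)$ for some $t<n$, and $b_j = z$ if $j=\pi(n)$. For $b\in\{0,1\}^n$, the suspect set is $S(b) := \{ i \in [n] : \exists \rho\in S_n, u\in\{0,1\} \text{ with } \rho(n)=i \text{ and } b(\rho,u)=b\}$. The cost of the strategy on $(\pi,z)$ is $|S(b(\pi,z))|$; the complexity of the strategy is the maximum cost over all pairs $(\pi,z)\in S_n\times\{0,1\}$; and $\mathrm{compl}(\mathcal{G}_{CS,n})$ is the minimum complexity over all Bob-strategies for $n$. *)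

theory Defs
  imports Complex_Main "HOL-Combinatorics.Permutations"
begin

text \<open>Permutations of [n] are functions pi with pi permutes {1..n}.
  A Bob-strategy is F :: nat => (nat => nat) => bool, F t being the function F_t.\<close>

definition t_restricted :: "nat \<Rightarrow> nat \<Rightarrow> ((nat \<Rightarrow> nat) \<Rightarrow> bool) \<Rightarrow> bool" where
  "t_restricted n t G \<longleftrightarrow>
     (\<forall>\<pi> \<sigma>. \<pi> permutes {1..n} \<longrightarrow> \<sigma> permutes {1..n} \<longrightarrow>
        (\<forall>i\<in>{1..t}. \<pi> i = \<sigma> i) \<longrightarrow> G \<pi> = G \<sigma>)"

definition bob_strategy :: "nat \<Rightarrow> (nat \<Rightarrow> (nat \<Rightarrow> nat) \<Rightarrow> bool) \<Rightarrow> bool" where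
  "bob_strategy n F \<longleftrightarrow> (\<forall>t\<in>{1..n-1}. t_restricted n t (F t))"

definition bvec :: "nat \<Rightarrow> (nat \<Rightarrow> (nat \<Rightarrow> nat) \<Rightarrow> bool) \<Rightarrow> (nat \<Rightarrow> nat) \<Rightarrow> bool \<Rightarrow> (nat \<Rightarrow> bool)" where
  "bvec n F \<pi> z = (\<lambda>j. if j \<in> {1..n} then
      (if j = \<pi> n then z else F (inv \<pi> j) \<pi>) else False)"

definition suspects :: "nat \<Rightarrow> (nat \<Rightarrow> (nat \<Rightarrow> nat) \<Rightarrow> bool) \<Rightarrow> (nat \<Rightarrow> bool) \<Rightarrow> nat set" where
  "suspects n F b = {i \<in> {1..n}. \<exists>\<rho> u. \<rho> permutes {1..n} \<and> \<rho> n = i \<and> bvec n F \<rho> u = b}"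

definition cost :: "nat \<Rightarrow> (nat \<Rightarrow> (nat \<Rightarrow> nat) \<Rightarrow> bool) \<Rightarrow> (nat \<Rightarrow> nat) \<Rightarrow> bool \<Rightarrow> nat" where
  "cost n F \<pi> z = card (suspects n F (bvec n F \<pi> z))"

definition complexity :: "nat \<Rightarrow> (nat \<Rightarrow> (nat \<Rightarrow> nat) \<Rightarrow> bool) \<Rightarrow> nat" where
  "complexity n F = Max {cost n F \<pi> z | \<pi> z. \<pi> permutes {1..n}}"

definition compl_CS :: "nat \<Rightarrow> nat" where
  "compl_CS n = (LEAST c. \<exists>F. bob_strategy n F \<and> complexity n F = c)"

text \<open>Boolean hypercube H_n: vertices are bool lists of length n.\<close>
definition hc_adj :: "bool list \<Rightarrow> bool list \<Rightarrow> bool" where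
  "hc_adj x y \<longleftrightarrow> length x = length y \<and> card {i. i < length x \<and> x ! i \<noteq> y ! i} = 1"

definition induced_degree :: "bool list set \<Rightarrow> bool list \<Rightarrow> nat" where
  "induced_degree K y = card {x \<in> K. hc_adj y x}"

end

theory Submission
  imports Defs
begin

definition sub :: "bool list set \<Rightarrow> (nat\<Rightarrow>nat) \<Rightarrow> (nat\<Rightarrow>bool) \<Rightarrow> nat \<Rightarrow> bool list set" where
  "sub K \<pi> a t = {x\<in>K. \<forall>i\<in>{1..t}. x!(\<pi> i - 1) = a (\<pi> i)}"

fun asg :: "bool list set \<Rightarrow> (nat\<Rightarrow>nat) \<Rightarrow> nat \<Rightarrow> nat \<Rightarrow> bool" where
  "asg K \<pi> 0 = (\<lambda>j. False)"
| "asg K \<pi> (Suc t) = (asg K \<pi> t)(\<pi> (Suc t) :=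
     (card {x\<in>sub K \<pi> (asg K \<pi> t) t. x!(\<pi> (Suc t) - 1)}
        \<ge> card {x\<in>sub K \<pi> (asg K \<pi> t) t. \<not> x!(\<pi> (Suc t) - 1)}))"

definition tolist :: "nat \<Rightarrow> (nat \<Rightarrow> bool) \<Rightarrow> bool list" where
  "tolist n b = map (\<lambda>k. b (Suc k)) [0..<n]"

definition flip :: "bool list \<Rightarrow> nat \<Rightarrow> bool list" where
  "flip xs p = xs[p := \<not> xs!p]"

lemma asg_restr:
  assumes "\<forall>i\<in>{1..t}. \<pi> i = \<sigma> i"
  shows "asg K \<pi> t = asg K \<sigma> t"
  using assms
proof (induction t)
  case 0 then show ?case by simp
next
  case (Suc t)
  then have IH: "asg K \<pi> t = asg K \<sigma> t" by auto
  have s: "sub K \<pi> (asg K \<pi> t) t = sub K \<sigma> (asg K \<sigma> t) t"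
    using Suc.prems IH unfolding sub_def by auto
  have "\<pi> (Suc t) = \<sigma> (Suc t)" using Suc.prems by auto
  then show ?case using IH s by simp
qed

lemma asg_stable:
  assumes "inj \<pi>" "1 \<le> i" "i \<le> t"
  shows "asg K \<pi> t (\<pi> i) = asg K \<pi> i (\<pi> i)"
  using assms(3)
proof (induction t)
  case 0 then show ?case using assms(2) by simp
next
  case (Suc t)
  show ?case
  proof (cases "i = Suc t")
    case True then show ?thesis by simp
  next
    case False
    then have "i \<le> t" using Suc.prems by simp
    moreover have "\<pi> i \<noteq> \<pi> (Suc t)" using False assms(1) by (meson injD)
    ultimately show ?thesis using Suc.IH by simp
  qed
qed

lemma invariant:
  assumes "\<pi> permutes {1..n}" "finite K" "card K > 2^(n-1)" "t \<le> n - 1"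
  shows "card (sub K \<pi> (asg K \<pi> t) t) > 2^(n-1-t)"
  using assms(4)
proof (induction t)
  case 0
  have "sub K \<pi> (\<lambda>j. False) 0 = K" unfolding sub_def by auto
  then show ?case using assms(3) by simp
next
  case (Suc t)
  define a where "a = asg K \<pi> t"
  define S where "S = sub K \<pi> a t"
  define j where "j = \<pi> (Suc t)"
  define ST where "ST = {x\<in>S. x!(j - 1)}"
  define SF where "SF = {x\<in>S. \<not> x!(j - 1)}"
  define c where "c = (card ST \<ge> card SF)"
  have IH: "card S > 2^(n-1-t)" using Suc by (simp add: S_def a_def)
  have fin: "finite S" using assms(2) unfolding S_def sub_def by auto
  have cardS: "card S = card ST + card SF"
  proof -
    have "S = ST \<union> SF" "ST \<inter> SF = {}" unfolding ST_def SF_def by auto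
    then show ?thesis using fin card_Un_disjoint[of ST SF]
      by (metis ST_def SF_def finite_Un)
  qed
  have inj: "inj \<pi>" using assms(1) permutes_inj by blast
  have asgS: "asg K \<pi> (Suc t) = a(j := c)"
    by (simp add: a_def j_def c_def ST_def SF_def S_def)
  have neq: "\<And>i. i\<in>{1..t} \<Longrightarrow> \<pi> i \<noteq> j"
    using inj unfolding j_def by (auto dest: injD)
  have A: "{1..Suc t} = insert (Suc t) {1..t}" by auto
  have subS: "sub K \<pi> (asg K \<pi> (Suc t)) (Suc t) = {x\<in>S. x!(j-1) = c}"
    unfolding asgS S_def sub_def A using neq j_def by auto
  have e: "(2::nat)^(n-1-t) = 2 * 2^(n-1-Suc t)"
    using Suc.prems by (metis Suc_diff_Suc Suc_le_lessD diff_Suc_Suc diff_diff_left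
        plus_1_eq_Suc power_Suc)
  show ?case
  proof (cases c)
    case True
    then have "{x\<in>S. x!(j-1) = c} = ST" unfolding ST_def by auto
    moreover have "card ST \<ge> card SF" using True c_def by simp
    ultimately show ?thesis using subS IH cardS e by (simp del: asg.simps)
  next
    case False
    then have "{x\<in>S. x!(j-1) = c} = SF" unfolding SF_def by auto
    moreover have "card ST < card SF" using False c_def by simp
    ultimately show ?thesis using subS IH cardS e by (simp del: asg.simps)
  qed
qed

definition Fs :: "bool list set \<Rightarrow> nat \<Rightarrow> (nat \<Rightarrow> nat) \<Rightarrow> bool" where
  "Fs K t \<pi> = asg K \<pi> t (\<pi> t)"

lemma strat: "bob_strategy n (Fs K)"
  unfolding bob_strategy_def t_restricted_def Fs_def
proof (intro ballI allI impI)
  fix t :: nat and \<pi> \<sigma> :: "nat \<Rightarrow> nat"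
  assume t: "t \<in> {1..n-1}" and h: "\<forall>i\<in>{1..t}. \<pi> i = \<sigma> i"
  have "\<pi> t = \<sigma> t" using t h by auto
  then show "asg K \<pi> t (\<pi> t) = asg K \<sigma> t (\<sigma> t)" using asg_restr[OF h] by simp
qed

lemma len_tolist[simp]: "length (tolist n b) = n" unfolding tolist_def by simp
lemma nth_tolist[simp]: "k < n \<Longrightarrow> tolist n b ! k = b (Suc k)" unfolding tolist_def by simp

lemma inK:
  assumes "\<rho> permutes {1..n}" "finite K" "card K > 2^(n-1)" "K \<subseteq> {x. length x = n}" "n > 1"
  shows "tolist n (bvec n (Fs K) \<rho> u) \<in> K"
proof -
  define a where "a = asg K \<rho> (n-1)"
  define S where "S = sub K \<rho> a (n-1)"
  have "card S > 1" using invariant[OF assms(1-3), of "n-1"] by (simp add: S_def a_def)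
  moreover have "finite S" using calculation card.infinite by fastforce
  ultimately obtain x y where xy: "x \<in> S" "y \<in> S" "x \<noteq> y"
    by (metis One_nat_def card_le_Suc0_iff_eq not_less)
  have inj: "inj \<rho>" using assms(1) permutes_inj by blast
  have lx: "length x = n" "length y = n" "x \<in> K" "y \<in> K"
    using xy assms(4) unfolding S_def sub_def by auto
  have "n \<in> {1..n}" using assms(5) by simp
  then have rn: "\<rho> n \<in> {1..n}" using permutes_in_image[OF assms(1)] by blast
  define p where "p = \<rho> n - 1"
  have pn: "p < n" using rn p_def by auto
  have other: "\<exists>i\<in>{1..n-1}. \<rho> i = Suc k" if "k < n" "Suc k \<noteq> \<rho> n" for k
  proof -
    have "Suc k \<in> {1..n}" using that by auto
    then have "inv \<rho> (Suc k) \<in> {1..n}" using permutes_in_image[OF permutes_inv[OF assms(1)]] by blast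
    moreover have "\<rho> (inv \<rho> (Suc k)) = Suc k" using assms(1) permutes_inverses(1) by fastforce
    moreover have "inv \<rho> (Suc k) \<noteq> n" using calculation(2) that(2) by auto
    ultimately show ?thesis using that by (intro bexI[of _ "inv \<rho> (Suc k)"]) auto
  qed
  have agree: "x!k = y!k" if kn: "k < n" "k \<noteq> p" for k
  proof -
    have "Suc k \<noteq> \<rho> n" using kn p_def rn by auto
    then obtain i where i: "i\<in>{1..n-1}" "\<rho> i = Suc k" using other kn by blast
    then show ?thesis using xy unfolding S_def sub_def by force
  qed
  have dp: "x!p \<noteq> y!p"
  proof
    assume h: "x!p = y!p"
    have "x = y"
    proof (rule nth_equalityI)
      show "length x = length y" using lx by simp
      fix k assume "k < length x"
      then show "x!k = y!k" using agree h lx by (cases "k = p") auto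
    qed
    then show False using xy(3) by simp
  qed
  define L where "L = tolist n (bvec n (Fs K) \<rho> u)"
  have Lx: "L = x" if xp: "x!p = u" and xS: "x \<in> S" for x
  proof -
    have lxx: "length x = n" using xS assms(4) unfolding S_def sub_def by auto
    show ?thesis
    proof (rule nth_equalityI)
      show "length L = length x" using lxx L_def by simp
      fix k assume "k < length L"
      then have k: "k < n" using L_def by simp
      show "L!k = x!k"
      proof (cases "Suc k = \<rho> n")
        case True
        then have "k = p" using p_def by simp
        then show ?thesis using True k xp unfolding L_def bvec_def by simp
      next
        case False
        obtain i where i: "i\<in>{1..n-1}" "\<rho> i = Suc k" using other[OF k False] by blast
        have "inv \<rho> (Suc k) = i" using i inj by (metis inv_f_f)
        then have "L!k = asg K \<rho> i (\<rho> i)" using k False i unfolding L_def bvec_def Fs_def by simp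
        also have "\<dots> = a (\<rho> i)" unfolding a_def using asg_stable[OF inj, of i "n-1"] i by simp
        also have "\<dots> = x!k" using xS i unfolding S_def sub_def by force
        finally show ?thesis .
      qed
    qed
  qed
  show ?thesis
  proof (cases "x!p = u")
    case True then show ?thesis using Lx[OF True xy(1)] lx L_def by simp
  next
    case False
    then have "y!p = u" using dp by auto
    then show ?thesis using Lx[OF _ xy(2)] lx L_def by simp
  qed
qed



lemma flip_adj: "p < length xs \<Longrightarrow> hc_adj xs (flip xs p)"
proof -
  assume p: "p < length xs"
  have "{i. i < length xs \<and> xs!i \<noteq> flip xs p ! i} = {p}"
    using p unfolding flip_def by (auto simp: nth_list_update)
  then show ?thesis unfolding hc_adj_def flip_def by simp
qed

lemma flip_eq:
  assumes "\<rho> permutes {1..n}" "n > 1"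
  shows "tolist n (bvec n F \<rho> (\<not>u)) = flip (tolist n (bvec n F \<rho> u)) (\<rho> n - 1)"
proof -
  have "n \<in> {1..n}" using assms(2) by simp
  then have rn: "\<rho> n \<in> {1..n}" using permutes_in_image[OF assms(1)] by blast
  show ?thesis
  proof (rule nth_equalityI)
    show "length (tolist n (bvec n F \<rho> (\<not>u))) = length (flip (tolist n (bvec n F \<rho> u)) (\<rho> n - 1))"
      unfolding flip_def by simp
    fix k assume "k < length (tolist n (bvec n F \<rho> (\<not>u)))"
    then have k: "k < n" by simp
    show "tolist n (bvec n F \<rho> (\<not>u)) ! k = flip (tolist n (bvec n F \<rho> u)) (\<rho> n - 1) ! k"
      using k rn unfolding flip_def bvec_def by (auto simp: nth_list_update)
  qed
qed

theorem theorem1: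
  fixes n :: nat and K :: "bool list set" and D :: real
  assumes "n > 1"
    and "K \<subseteq> {x. length x = n}"
    and "card K > 2 ^ (n - 1)"
    and "D > 0"
    and "\<forall>y\<in>K. real (induced_degree K y) \<le> D"
  shows "real (compl_CS n) \<le> D"
proof -
  have finK: "finite K" using assms(3) card.infinite by fastforce
  define F where "F = Fs K"
  have costle: "real (cost n F \<pi> z) \<le> D" if pi: "\<pi> permutes {1..n}" for \<pi> z
  proof -
    define b where "b = bvec n F \<pi> z"
    define xs where "xs = tolist n b"
    have xsK: "xs \<in> K" unfolding xs_def b_def F_def using inK[OF pi finK assms(3) assms(2) assms(1)] .
    have "card (suspects n F b) \<le> card {x\<in>K. hc_adj xs x}"
    proof (rule card_inj_on_le[of "\<lambda>i. flip xs (i-1)"])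
      show "finite {x\<in>K. hc_adj xs x}" using finK by simp
      show "inj_on (\<lambda>i. flip xs (i - 1)) (suspects n F b)"
      proof (rule inj_onI)
        fix i i' assume i: "i \<in> suspects n F b" and i': "i' \<in> suspects n F b"
          and eq: "flip xs (i - 1) = flip xs (i' - 1)"
        have r: "i \<in> {1..n}" "i' \<in> {1..n}" using i i' unfolding suspects_def by auto
        show "i = i'"
        proof (rule ccontr)
          assume ne: "i \<noteq> i'"
          have "flip xs (i - 1) ! (i-1) \<noteq> flip xs (i' - 1) ! (i-1)"
            using r ne unfolding flip_def xs_def by (auto simp: nth_list_update)
          then show False using eq by simp
        qed
      qed
      show "(\<lambda>i. flip xs (i - 1)) ` suspects n F b \<subseteq> {x\<in>K. hc_adj xs x}"
      proof
        fix y assume "y \<in> (\<lambda>i. flip xs (i - 1)) ` suspects n F b"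
        then obtain i where i: "i \<in> suspects n F b" and y: "y = flip xs (i - 1)" by blast
        obtain \<rho> u where \<rho>: "\<rho> permutes {1..n}" "\<rho> n = i" "bvec n F \<rho> u = b" "i \<in> {1..n}"
          using i unfolding suspects_def by blast
        have "y = tolist n (bvec n F \<rho> (\<not>u))"
          using flip_eq[OF \<rho>(1) assms(1), of F u] \<rho> y xs_def by simp
        then have "y \<in> K" unfolding F_def using inK[OF \<rho>(1) finK assms(3) assms(2) assms(1)] by simp
        moreover have "hc_adj xs y" using y \<rho>(4) xs_def flip_adj by auto
        ultimately show "y \<in> {x\<in>K. hc_adj xs x}" by simp
      qed
    qed
    also have "real \<dots> \<le> D" using assms(5) xsK unfolding induced_degree_def by auto
    finally show ?thesis unfolding cost_def b_def[symmetric] xs_def by simp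
  qed
  define C where "C = {cost n F \<pi> z | \<pi> z. \<pi> permutes {1..n}}"
  have "C = (\<lambda>(\<pi>,z). cost n F \<pi> z) ` ({\<pi>. \<pi> permutes {1..n}} \<times> UNIV)"
    unfolding C_def by auto
  then have finC: "finite C" using finite_permutations[of "{1..n}"] by simp
  have "cost n F id True \<in> C" unfolding C_def using permutes_id by blast
  then have "Max C \<in> C" using finC Max_in by blast
  then have cx: "real (complexity n F) \<le> D" unfolding complexity_def C_def[symmetric]
    using costle unfolding C_def by auto
  have "compl_CS n \<le> complexity n F" unfolding compl_CS_def
    by (rule Least_le) (use strat F_def in blast)
  then show ?thesis using cx by linarith
qed

end
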